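(* Let $w>1$ and assume $\alpha_2-\alpha_1\ge\frac{16}{\sqrt{\ln w}}$. Let $s_0\in[\frac34,1)$ and suppose the solution of the guided probability flow ODE satisfies $\tilde x(s)\ge\frac{\alpha_1+\alpha_2}{2}$ for all $s\in[s_0,1]$. Define $$s_1=\max\Bigl(1-\frac{16(1-s_0)^5}{\bigl(1-2(1-s_0)\bigr)^4\bigl(\tilde x(s_0)-\alpha_2\bigr)^4},\ s_0\Bigr)$$ (with $s_1=s_0$ if $\tilde x(s_0)=\alpha_2$). Then for every $s\in[s_1,1]$, $$\tilde x(s)\le\alpha_2\Bigl(1+4(1-s_0)\Bigl(1+\frac{\alpha_2w}{\alpha_1^2}\Bigr)\Bigr).$$
   Context: Let $0<\alpha_1<\alpha_2$ and $\beta\ge1$. Let $p^{(1)}$ and $p^{(-1)}$ be probability densities on $\mathbb R$ supported on $[\alpha_1,\alpha_2]$ and $[-\alpha_2,-\alpha_1]$ respectively, which are $\beta$-bounded with respect to each other: $\frac1\beta\le \frac{p^{(-1)}(x_1)}{p^{(1)}(x_2)}\le\beta$ for all $x_1\in(-\alpha_2,-\alpha_1)$, $x_2\in(\alpha_1,\alpha_2)$. Let $p=\frac12p^{(1)}+\frac12p^{(-1)}$, and let $(X_0,z)$ be jointly distributed with $z$ uniform on $\{\pm1\}$ and $X_0\mid z\sim p^{(z)}$. Fix $T>0$; for $t\in[0,T]$ put $a_t=e^{t-T}$, $b_t=\sqrt{1-a_t^2}$, and $X_t=a_tX_0+\xi_t$ with $\xi_t\sim\mathcal N(0,b_t^2)$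 independent of $(X_0,z)$. Let $p_t$ denote the density of $X_t$ and $p_t(\cdot\mid z=\pm1)$ the conditional density of $X_t$ given $z=\pm1$. For a guidance parameter $w\ge0$, the guided probability flow ODE is $x'(t)=x(t)+(w+1)\nabla\log p_t(x(t)\mid z=1)-w\nabla\log p_t(x(t))$, $t\in[0,T)$, and $\tilde x(1)=\lim_{t\to T}x(t)$. Time is reparametrized by $s=a_t=e^{t-T}\in[e^{-T},1]$, $\tilde x(s)=x(T+\ln s)$. *)

theory Defs
  imports "HOL-Probability.Probability"
begin

definition sched_a :: "real \<Rightarrow> real \<Rightarrow> real" where
  "sched_a T t = exp (t - T)"

definition sched_b :: "real \<Rightarrow> real \<Rightarrow> real" where
  "sched_b T t = sqrt (1 - (sched_a T t)\<^sup>2)"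

definition is_pdf :: "(real \<Rightarrow> real) \<Rightarrow> bool" where
  "is_pdf p \<longleftrightarrow> (\<forall>x. 0 \<le> p x) \<and> p \<in> borel_measurable borel \<and>
     integrable lborel p \<and> (LINT x|lborel. p x) = 1"

text \<open>Density of X_t = a_t X_0 + xi_t with X_0 ~ q and xi_t ~ N(0, b_t^2) independent.\<close>
definition noised_density :: "real \<Rightarrow> (real \<Rightarrow> real) \<Rightarrow> real \<Rightarrow> real \<Rightarrow> real" where
  "noised_density T q t x = (LINT y|lborel. q y * normal_density (sched_a T t * y) (sched_b T t) x)"

definition mix_density :: "real \<Rightarrow> (real \<Rightarrow> real) \<Rightarrow> (real \<Rightarrow> real) \<Rightarrow> real \<Rightarrow> real \<Rightarrow> real" where
  "mix_density T p1 pm1 t x = 1/2 * noised_density T p1 t x + 1/2 * noised_density T pm1 t x"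

definition score :: "(real \<Rightarrow> real) \<Rightarrow> real \<Rightarrow> real" where
  "score f x = deriv (\<lambda>y. ln (f y)) x"

definition guided_field :: "real \<Rightarrow> (real \<Rightarrow> real) \<Rightarrow> (real \<Rightarrow> real) \<Rightarrow> real \<Rightarrow> real \<Rightarrow> real \<Rightarrow> real" where
  "guided_field T p1 pm1 w t x =
     x + (w + 1) * score (noised_density T p1 t) x - w * score (mix_density T p1 pm1 t) x"

end

theory Submission
  imports Defs
begin

lemma lip_bound:
  fixes f f' :: "real \<Rightarrow> real"
  assumes d: "\<And>z. DERIV f z :> f' z" and b: "\<And>z. \<bar>f' z\<bar> \<le> B"
  shows "\<bar>f u - f v\<bar> \<le> B * \<bar>u - v\<bar>"
proof -
  have cont: "continuous_on S f" for S
    using d by (meson DERIV_continuous continuous_at_imp_continuous_on)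
  have *: "\<bar>f b - f a\<bar> \<le> B * \<bar>b - a\<bar>" if "a < b" for a b
  proof -
    have "\<exists>l z. a < z \<and> z < b \<and> DERIV f z :> l \<and> f b - f a = (b - a) * l"
      by (rule MVT) (use that cont d real_differentiable_def in blast)+
    then obtain l z where "DERIV f z :> l" "f b - f a = (b - a) * l" by blast
    then have "l = f' z" using d DERIV_unique by blast
    then show ?thesis using \<open>f b - f a = (b - a) * l\<close> b[of z] that
      by (simp add: abs_mult mult.commute mult_right_mono)
  qed
  show ?thesis
  proof (cases u v rule: linorder_cases)
    case less then show ?thesis using *[of u v] by (simp add: abs_minus_commute)
  next
    case greater then show ?thesis using *[of v u] by simp
  qed simp
qed

lemma gauss_deriv:
  assumes "0 < \<sigma>"
  shows "(normal_density \<mu> \<sigma> has_real_derivative normal_density \<mu> \<sigma> x * (\<mu> - x) / \<sigma>\<^sup>2) (at x)"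
proof -
  have d1: "((\<lambda>x. -(x-\<mu>)\<^sup>2/(2*\<sigma>\<^sup>2)) has_real_derivative (\<mu>-x)/\<sigma>\<^sup>2) (at x)"
    using assms by (auto intro!: derivative_eq_intros simp: power2_eq_square field_simps)
  have e: "normal_density \<mu> \<sigma> = (\<lambda>x. 1/sqrt(2*pi*\<sigma>\<^sup>2) * exp(-(x-\<mu>)\<^sup>2/(2*\<sigma>\<^sup>2)))"
    by (rule ext) (simp add: normal_density_def)
  have "((\<lambda>x. 1/sqrt(2*pi*\<sigma>\<^sup>2) * exp(-(x-\<mu>)\<^sup>2/(2*\<sigma>\<^sup>2))) has_real_derivative
     1/sqrt(2*pi*\<sigma>\<^sup>2) * (exp(-(x-\<mu>)\<^sup>2/(2*\<sigma>\<^sup>2)) * ((\<mu>-x)/\<sigma>\<^sup>2))) (at x)"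
    by (intro DERIV_cmult DERIV_fun_exp d1)
  then show ?thesis unfolding e by (simp add: mult.assoc)
qed

lemma gauss_le: "normal_density \<mu> \<sigma> x \<le> 1 / sqrt (2 * pi * \<sigma>\<^sup>2)"
proof -
  have "exp (-(x - \<mu>)\<^sup>2/ (2 * \<sigma>\<^sup>2)) \<le> 1" by simp
  then show ?thesis unfolding normal_density_def
    by (intro mult_left_le) auto
qed

lemma gauss_deriv_bound:
  assumes "0 < \<sigma>"
  shows "\<bar>normal_density \<mu> \<sigma> x * (\<mu> - x) / \<sigma>\<^sup>2\<bar> \<le> 1 / sqrt (2 * pi * \<sigma>\<^sup>2) / \<sigma>"
proof -
  define z where "z = \<bar>\<mu> - x\<bar>"
  have e: "exp (z\<^sup>2 / (2*\<sigma>\<^sup>2)) \<ge> z / \<sigma>"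
  proof -
    have "exp (z\<^sup>2 / (2*\<sigma>\<^sup>2)) \<ge> 1 + z\<^sup>2 / (2*\<sigma>\<^sup>2)" by (rule exp_ge_add_one_self)
    moreover have "1 + z\<^sup>2 / (2*\<sigma>\<^sup>2) \<ge> z / \<sigma>"
    proof -
      define u where "u = z/\<sigma>"
      have "0 \<le> (u - 1)\<^sup>2" by simp
      then have "0 \<le> u\<^sup>2 - 2*u + 1" by (simp add: power2_diff)
      moreover have "z\<^sup>2 / (2*\<sigma>\<^sup>2) = u\<^sup>2/2" unfolding u_def by (simp add: power_divide)
      ultimately show ?thesis unfolding u_def[symmetric] by linarith
    qed
    ultimately show ?thesis by linarith
  qed
  have "\<bar>normal_density \<mu> \<sigma> x * (\<mu> - x) / \<sigma>\<^sup>2\<bar> = 1 / sqrt (2 * pi * \<sigma>\<^sup>2) * (z * exp (-(z\<^sup>2) / (2*\<sigma>\<^sup>2))) / \<sigma>\<^sup>2"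
    unfolding normal_density_def z_def using assms by (simp add: abs_mult power2_abs power2_commute)
  also have "z * exp (-(z\<^sup>2) / (2*\<sigma>\<^sup>2)) \<le> \<sigma>"
  proof -
    have "z * exp (-(z\<^sup>2) / (2*\<sigma>\<^sup>2)) = z / exp (z\<^sup>2 / (2*\<sigma>\<^sup>2))"
      by (simp add: exp_minus field_simps)
    also have "\<dots> \<le> \<sigma>" using e assms z_def
      by (simp add: divide_le_eq mult.commute pos_divide_le_eq)
    finally show ?thesis .
  qed
  then have "1 / sqrt (2 * pi * \<sigma>\<^sup>2) * (z * exp (-(z\<^sup>2) / (2*\<sigma>\<^sup>2))) / \<sigma>\<^sup>2 \<le> 1 / sqrt (2 * pi * \<sigma>\<^sup>2) * \<sigma> / \<sigma>\<^sup>2"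
    by (intro divide_right_mono mult_left_mono) auto
  also have "\<dots> = 1 / sqrt (2 * pi * \<sigma>\<^sup>2) / \<sigma>" using assms by (simp add: power2_eq_square)
  finally show ?thesis .
qed

lemma meas_K: "(\<lambda>y. normal_density (a*y) \<sigma> x) \<in> borel_measurable borel"
  unfolding normal_density_def by measurable

lemma int_qK:
  fixes q :: "real \<Rightarrow> real"
  assumes q0: "\<forall>y. 0 \<le> q y" and qm: "q \<in> borel_measurable borel" and qi: "integrable lborel q"
    and hm: "h \<in> borel_measurable borel" and hb: "\<And>y. \<bar>h y\<bar> \<le> C"
  shows "integrable lborel (\<lambda>y. q y * h y)"
proof (rule Bochner_Integration.integrable_bound[where f="\<lambda>y. q y * C"])
  show "integrable lborel (\<lambda>y. q y * C)" using qi by simp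
  show "(\<lambda>y. q y * h y) \<in> borel_measurable lborel" using qm hm by simp
  show "AE y in lborel. norm (q y * h y) \<le> norm (q y * C)"
  proof (rule AE_I2)
    fix y
    have "\<bar>q y * h y\<bar> \<le> q y * C" using q0 hb[of y] by (simp add: abs_mult mult_left_mono)
    then show "norm (q y * h y) \<le> norm (q y * C)" by simp
  qed
qed

lemma noised_deriv:
  fixes q :: "real \<Rightarrow> real"
  assumes q0: "\<forall>y. 0 \<le> q y" and qm: "q \<in> borel_measurable borel" and qi: "integrable lborel q"
    and \<sigma>: "0 < \<sigma>"
  shows "((\<lambda>x. LINT y|lborel. q y * normal_density (a*y) \<sigma> x) has_real_derivative
          (LINT y|lborel. q y * (normal_density (a*y) \<sigma> x * (a*y - x) / \<sigma>\<^sup>2))) (at x)"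
proof -
  define C where "C = 1 / sqrt (2 * pi * \<sigma>\<^sup>2)"
  define B where "B = 1 / sqrt (2 * pi * \<sigma>\<^sup>2) / \<sigma>"
  define K where "K = (\<lambda>y x. normal_density (a*y) \<sigma> x)"
  define N where "N = (\<lambda>x. LINT y|lborel. q y * K y x)"
  have KC: "\<bar>K y z\<bar> \<le> C" for y z unfolding K_def C_def using gauss_le by simp
  have intK: "integrable lborel (\<lambda>y. q y * K y z)" for z
    by (rule int_qK[OF q0 qm qi _ KC]) (simp add: K_def meas_K)
  have dK: "((K y) has_real_derivative K y z * (a*y - z) / \<sigma>\<^sup>2) (at z)" for y z
    unfolding K_def by (rule gauss_deriv[OF \<sigma>])
  have dKb: "\<bar>K y z * (a*y - z) / \<sigma>\<^sup>2\<bar> \<le> B" for y z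
    unfolding K_def B_def by (rule gauss_deriv_bound[OF \<sigma>])
  have lip: "\<bar>K y u - K y v\<bar> \<le> B * \<bar>u - v\<bar>" for y u v
    by (rule lip_bound[OF dK dKb])
  have "((\<lambda>z. (N z - N x) / (z - x)) \<longlongrightarrow> (LINT y|lborel. q y * (K y x * (a*y - x) / \<sigma>\<^sup>2))) (at x)"
    unfolding tendsto_at_iff_sequentially
  proof (intro allI impI)
    fix X :: "nat \<Rightarrow> real"
    assume Xne: "\<forall>i. X i \<in> UNIV - {x}" and Xl: "X \<longlonglongrightarrow> x"
    have eq: "((\<lambda>z. (N z - N x) / (z - x)) \<circ> X) i =
       (LINT y|lborel. q y * ((K y (X i) - K y x) / (X i - x)))" for i
    proof -
      have "(LINT y|lborel. q y * ((K y (X i) - K y x) / (X i - x))) =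
            (LINT y|lborel. (q y * K y (X i) - q y * K y x) / (X i - x))"
        by (simp add: algebra_simps)
      also have "\<dots> = (LINT y|lborel. q y * K y (X i) - q y * K y x) / (X i - x)"
        by (rule integral_divide_zero)
      also have "(LINT y|lborel. q y * K y (X i) - q y * K y x) = N (X i) - N x"
        unfolding N_def by (rule Bochner_Integration.integral_diff[OF intK intK])
      finally show ?thesis by (metis comp_apply)
    qed
    show "((\<lambda>z. (N z - N x) / (z - x)) \<circ> X) \<longlonglongrightarrow> (LINT y|lborel. q y * (K y x * (a*y - x) / \<sigma>\<^sup>2))"
      unfolding eq
    proof (rule integral_dominated_convergence[where w="\<lambda>y. q y * B"])
      show "(\<lambda>y. q y * (K y x * (a * y - x) / \<sigma>\<^sup>2)) \<in> borel_measurable lborel"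
        using qm unfolding K_def normal_density_def by measurable
      show "(\<lambda>y. q y * ((K y (X i) - K y x) / (X i - x))) \<in> borel_measurable lborel" for i
        using qm unfolding K_def normal_density_def by measurable
      show "integrable lborel (\<lambda>y. q y * B)" using qi by simp
      show "AE y in lborel. (\<lambda>i. q y * ((K y (X i) - K y x) / (X i - x))) \<longlonglongrightarrow> q y * (K y x * (a * y - x) / \<sigma>\<^sup>2)"
      proof (rule AE_I2, rule tendsto_mult_left)
        fix y
        have "((\<lambda>z. (K y z - K y x) / (z - x)) \<longlongrightarrow> K y x * (a*y - x) / \<sigma>\<^sup>2) (at x)"
          using dK[of y x] unfolding has_field_derivative_iff by simp
        then show "(\<lambda>i. (K y (X i) - K y x) / (X i - x)) \<longlonglongrightarrow> K y x * (a*y - x) / \<sigma>\<^sup>2"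
          unfolding tendsto_at_iff_sequentially using Xne Xl by (simp add: comp_def)
      qed
      show "AE y in lborel. norm (q y * ((K y (X i) - K y x) / (X i - x))) \<le> q y * B" for i
      proof (rule AE_I2)
        fix y
        have ne: "X i - x \<noteq> 0" using Xne by auto
        have "\<bar>(K y (X i) - K y x) / (X i - x)\<bar> \<le> B"
          using lip[of y "X i" x] ne by (simp add: divide_le_eq abs_divide)
        then show "norm (q y * ((K y (X i) - K y x) / (X i - x))) \<le> q y * B"
          using q0 mult_left_mono[of _ B "q y"] by (simp add: abs_mult times_divide_eq_right[symmetric] del: times_divide_eq_right)
      qed
    qed
  qed
  then show ?thesis unfolding has_field_derivative_iff N_def K_def by simp
qed

lemma score_eq:
  assumes "(f has_real_derivative d) (at x)" "0 < f x"
  shows "score f x = d / f x"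
proof -
  have "((\<lambda>y. ln (f y)) has_real_derivative (1 / f x) * d) (at x)"
    by (rule DERIV_chain2[OF DERIV_ln_divide[OF assms(2)] assms(1)])
  then show ?thesis unfolding score_def by (simp add: DERIV_imp_deriv)
qed

lemma field_algebra:
  fixes x w n1 nm d1 dm A Bm E :: real
  assumes n1: "0 < n1" and nm: "0 \<le> nm" and w: "0 \<le> w"
    and d1: "d1 \<le> A * n1" and dm: "- Bm * nm \<le> dm" and ne: "nm \<le> E * n1"
    and AB: "0 \<le> A + Bm"
  shows "x + (w + 1) * (d1 / n1) - w * ((1/2 * d1 + 1/2 * dm) / (1/2 * n1 + 1/2 * nm))
         \<le> x + A + w * (A + Bm) * E"
proof -
  have s: "0 < n1 + nm" using n1 nm by simp
  have e1: "(1/2 * d1 + 1/2 * dm) / (1/2 * n1 + 1/2 * nm) = (d1 + dm) / (n1 + nm)"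
  proof -
    have "1/2 * n1 + 1/2 * nm \<noteq> 0" using s by simp
    then show ?thesis using s by (simp add: field_simps)
  qed
  have e2: "(w + 1) * (d1 / n1) - w * ((d1 + dm) / (n1 + nm))
          = d1 / n1 + w * ((d1 * nm - dm * n1) / (n1 * (n1 + nm)))"
  proof -
    have gen: "(w + 1) * (d1 / n1) - w * ((d1 + dm) / m) = d1 / n1 + w * ((d1 * (m - n1) - dm * n1) / (n1 * m))"
      if "0 < m" for m
    proof -
      have "(d1 * (m - n1) - dm * n1) / (n1 * m) = d1 / n1 - (d1 + dm) / m"
        using n1 that by (simp add: divide_simps) (simp add: algebra_simps)
      moreover have "\<And>a b. (w + 1) * a - w * b = a + w * (a - b)" by (simp add: algebra_simps)
      ultimately show ?thesis by metis
    qed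
    show ?thesis using gen[OF s] by simp
  qed
  have q1: "d1 / n1 \<le> A" using d1 n1 by (simp add: divide_le_eq)
  have "d1 * nm - dm * n1 \<le> A * n1 * nm + Bm * nm * n1"
  proof -
    have "d1 * nm \<le> A * n1 * nm" using d1 nm by (simp add: mult_right_mono)
    moreover have "- dm * n1 \<le> Bm * nm * n1"
    proof -
      have "- dm \<le> Bm * nm" using dm by simp
      then have "(- dm) * n1 \<le> (Bm * nm) * n1" using n1 by (intro mult_right_mono) auto
      then show ?thesis by simp
    qed
    ultimately show ?thesis by linarith
  qed
  also have "\<dots> = (A + Bm) * nm * n1" by (simp add: algebra_simps)
  finally have "(d1 * nm - dm * n1) / (n1 * (n1 + nm)) \<le> (A + Bm) * nm * n1 / (n1 * (n1 + nm))"
    using n1 s by (intro divide_right_mono) auto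
  also have "\<dots> = ((A + Bm) * nm * n1) / ((n1 + nm) * n1)" by (simp add: mult.commute)
  also have "\<dots> = (A + Bm) * nm / (n1 + nm)" using n1 by (rule nonzero_mult_divide_mult_cancel_right[OF less_imp_neq[symmetric]])
  also have "\<dots> = (A + Bm) * (nm / (n1 + nm))" by simp
  also have "\<dots> \<le> (A + Bm) * E"
  proof (intro mult_left_mono AB)
    have "nm / (n1 + nm) \<le> nm / n1" using n1 nm by (intro divide_left_mono) auto
    also have "\<dots> \<le> E" using ne n1 by (simp add: divide_le_eq)
    finally show "nm / (n1 + nm) \<le> E" .
  qed
  finally have q2: "w * ((d1 * nm - dm * n1) / (n1 * (n1 + nm))) \<le> w * ((A + Bm) * E)"
    using w by (intro mult_left_mono) auto
  show ?thesis unfolding e1 using e2 q1 q2 by (simp add: algebra_simps)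
qed

lemma field_bound:
  fixes \<alpha>1 \<alpha>2 T w t x :: real and p1 pm1 :: "real \<Rightarrow> real"
  assumes a1: "0 < \<alpha>1" and a12: "\<alpha>1 < \<alpha>2"
    and pdf1: "is_pdf p1" and pdfm: "is_pdf pm1"
    and s1: "\<forall>y. y \<notin> {\<alpha>1..\<alpha>2} \<longrightarrow> p1 y = 0"
    and sm: "\<forall>y. y \<notin> {-\<alpha>2..-\<alpha>1} \<longrightarrow> pm1 y = 0"
    and t0: "0 \<le> t" and tT: "t < T" and w0: "0 \<le> w"
    and xm: "(\<alpha>1 + \<alpha>2) / 2 \<le> x"
  shows "guided_field T p1 pm1 w t x \<le> x + (sched_a T t * \<alpha>2 - x) / (sched_b T t)\<^sup>2
           + w * (2 * sched_a T t * \<alpha>2 / (sched_b T t)\<^sup>2) * exp (- 2 * sched_a T t * \<alpha>1 * x / (sched_b T t)\<^sup>2)"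
proof -
  define a where "a = sched_a T t"
  define b where "b = sched_b T t"
  have a0: "0 < a" unfolding a_def sched_a_def by simp
  have a1': "a < 1" unfolding a_def sched_a_def using tT by simp
  have b2: "b\<^sup>2 = 1 - a\<^sup>2" unfolding b_def a_def[symmetric] sched_b_def
    using a0 a1' by (simp add: power_le_one)
  have b0: "0 < b" unfolding b_def a_def[symmetric] sched_b_def using a0 a1'
    by (simp add: power_less_one_iff abs_square_less_1)
  have bb: "0 < b\<^sup>2" using b0 by simp
  from pdf1 have p10: "\<forall>y. 0 \<le> p1 y" and p1m: "p1 \<in> borel_measurable borel"
    and p1i: "integrable lborel p1" and p1I: "(LINT y|lborel. p1 y) = 1" unfolding is_pdf_def by auto
  from pdfm have pm0: "\<forall>y. 0 \<le> pm1 y" and pmm: "pm1 \<in> borel_measurable borel"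
    and pmi: "integrable lborel pm1" and pmI: "(LINT y|lborel. pm1 y) = 1" unfolding is_pdf_def by auto
  define C where "C = 1 / sqrt (2 * pi * b\<^sup>2)"
  have C0: "0 < C" unfolding C_def using b0 by simp
  define K where "K = (\<lambda>y z. normal_density (a*y) b z)"
  have Kdef: "K y z = C * exp (- (z - a*y)\<^sup>2 / (2 * b\<^sup>2))" for y z
    unfolding K_def C_def normal_density_def by simp
  have K0: "0 \<le> K y z" for y z unfolding K_def by simp
  define N where "N = (\<lambda>q z. LINT y|lborel. q y * K y z)"
  define D where "D = (\<lambda>q. LINT y|lborel. q y * (K y x * (a*y - x) / b\<^sup>2))"
  have nd: "noised_density T q t = N q" for q
    unfolding noised_density_def N_def K_def a_def b_def by (rule ext) simp
  have dN: "(N q has_real_derivative D q) (at x)"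
    if "\<forall>y. 0 \<le> q y" "q \<in> borel_measurable borel" "integrable lborel q" for q
    unfolding N_def D_def K_def using noised_deriv[OF that b0] by simp
  have intK: "integrable lborel (\<lambda>y. q y * K y x)"
    if "\<forall>y. 0 \<le> q y" "q \<in> borel_measurable borel" "integrable lborel q" for q
    by (rule int_qK[OF that, where C=C]) (auto simp: K_def meas_K C_def gauss_le)
  have intKd: "integrable lborel (\<lambda>y. q y * (K y x * (a*y - x) / b\<^sup>2))"
    if "\<forall>y. 0 \<le> q y" "q \<in> borel_measurable borel" "integrable lborel q" for q
  proof (rule int_qK[OF that, where C="1 / sqrt (2 * pi * b\<^sup>2) / b"])
    show "(\<lambda>y. K y x * (a * y - x) / b\<^sup>2) \<in> borel_measurable borel"
      unfolding K_def normal_density_def by measurable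
    show "\<bar>K y x * (a * y - x) / b\<^sup>2\<bar> \<le> 1 / sqrt (2 * pi * b\<^sup>2) / b" for y
      unfolding K_def by (rule gauss_deriv_bound[OF b0])
  qed
  define A where "A = (a * \<alpha>2 - x) / b\<^sup>2"
  define Bm where "Bm = (a * \<alpha>2 + x) / b\<^sup>2"
  define E where "E = exp (- 2 * a * \<alpha>1 * x / b\<^sup>2)"
  have x0: "0 < x" using xm a1 a12 by simp
  have d1: "D p1 \<le> A * N p1 x"
  proof -
    have "D p1 \<le> (LINT y|lborel. A * (p1 y * K y x))"
      unfolding D_def
    proof (rule integral_mono[OF intKd[OF p10 p1m p1i]])
      show "integrable lborel (\<lambda>y. A * (p1 y * K y x))" using intK[OF p10 p1m p1i] by simp
      fix y
      show "p1 y * (K y x * (a * y - x) / b\<^sup>2) \<le> A * (p1 y * K y x)"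
      proof (cases "p1 y = 0")
        case False
        then have "y \<le> \<alpha>2" using s1 by auto
        then have "a * y - x \<le> a * \<alpha>2 - x" using a0 by simp
        then have "K y x * (a * y - x) / b\<^sup>2 \<le> K y x * (a * \<alpha>2 - x) / b\<^sup>2"
          using K0[of y x] bb by (intro divide_right_mono mult_left_mono) auto
        then have "p1 y * (K y x * (a * y - x) / b\<^sup>2) \<le> p1 y * (K y x * (a * \<alpha>2 - x) / b\<^sup>2)"
          using p10 by (intro mult_left_mono) auto
        also have "\<dots> = A * (p1 y * K y x)" unfolding A_def by simp
        finally show ?thesis .
      qed simp
    qed
    also have "\<dots> = A * N p1 x" unfolding N_def by simp
    finally show ?thesis .
  qed
  have dm: "- Bm * N pm1 x \<le> D pm1"
  proof -
    have "(LINT y|lborel. (- Bm) * (pm1 y * K y x)) \<le> D pm1"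
      unfolding D_def
    proof (rule integral_mono[OF _ intKd[OF pm0 pmm pmi]])
      show "integrable lborel (\<lambda>y. (- Bm) * (pm1 y * K y x))" using intK[OF pm0 pmm pmi] by simp
      fix y
      show "(- Bm) * (pm1 y * K y x) \<le> pm1 y * (K y x * (a * y - x) / b\<^sup>2)"
      proof (cases "pm1 y = 0")
        case False
        then have "- \<alpha>2 \<le> y" using sm by auto
        then have "a * (- \<alpha>2) \<le> a * y" using a0 by (intro mult_left_mono) auto
        then have "- (a * \<alpha>2 + x) \<le> a * y - x" by simp
        then have "K y x * (- (a * \<alpha>2 + x)) / b\<^sup>2 \<le> K y x * (a * y - x) / b\<^sup>2"
          using K0[of y x] bb by (intro divide_right_mono mult_left_mono) auto
        then have "pm1 y * (K y x * (- (a * \<alpha>2 + x)) / b\<^sup>2) \<le> pm1 y * (K y x * (a * y - x) / b\<^sup>2)"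
          using pm0 by (intro mult_left_mono) auto
        moreover have "pm1 y * (K y x * (- (a * \<alpha>2 + x)) / b\<^sup>2) = (- Bm) * (pm1 y * K y x)" unfolding Bm_def using bb by (simp add: field_simps)
        ultimately show ?thesis by simp
      qed simp
    qed
    moreover have "(LINT y|lborel. (- Bm) * (pm1 y * K y x)) = - Bm * N pm1 x" unfolding N_def
      by (rule integral_mult_right_zero)
    ultimately show ?thesis by linarith
  qed
  have nm0: "0 \<le> N pm1 x" unfolding N_def using pm0 K0 by (intro integral_nonneg_AE) auto
  have n1low: "C * exp (- (x - a*\<alpha>1)\<^sup>2 / (2 * b\<^sup>2)) \<le> N p1 x"
  proof -
    have "(LINT y|lborel. p1 y * (C * exp (- (x - a*\<alpha>1)\<^sup>2 / (2 * b\<^sup>2)))) \<le> N p1 x"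
      unfolding N_def
    proof (rule integral_mono[OF _ intK[OF p10 p1m p1i]])
      show "integrable lborel (\<lambda>y. p1 y * (C * exp (- (x - a * \<alpha>1)\<^sup>2 / (2 * b\<^sup>2))))" using p1i by simp
      fix y
      show "p1 y * (C * exp (- (x - a * \<alpha>1)\<^sup>2 / (2 * b\<^sup>2))) \<le> p1 y * K y x"
      proof (cases "p1 y = 0")
        case False
        then have y: "\<alpha>1 \<le> y" "y \<le> \<alpha>2" using s1 by auto
        have "\<bar>x - a*y\<bar> \<le> x - a*\<alpha>1"
        proof -
          have "a * \<alpha>1 \<le> a * y" "a*y \<le> a * \<alpha>2" using y a0 by auto
          moreover have "a * (\<alpha>1 + \<alpha>2) \<le> 2 * x"
          proof -
            have "a * (\<alpha>1 + \<alpha>2) \<le> \<alpha>1 + \<alpha>2" using a1' a1 a12 by (simp add: mult_le_cancel_right1)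
            moreover have "\<alpha>1 + \<alpha>2 \<le> 2 * x" using xm by simp
            ultimately show ?thesis by linarith
          qed
          ultimately show ?thesis by (simp add: algebra_simps abs_le_iff)
        qed
        then have "(x - a*y)\<^sup>2 \<le> (x - a*\<alpha>1)\<^sup>2"
          by (metis abs_le_square_iff abs_of_nonneg abs_ge_zero order_trans)
        then have "- (x - a*\<alpha>1)\<^sup>2 / (2 * b\<^sup>2) \<le> - (x - a*y)\<^sup>2 / (2 * b\<^sup>2)"
          using bb by (intro divide_right_mono) auto
        then have "C * exp (- (x - a * \<alpha>1)\<^sup>2 / (2 * b\<^sup>2)) \<le> K y x"
          unfolding Kdef using C0 by simp
        then show ?thesis using p10 by (simp add: mult_left_mono)
      qed simp
    qed
    moreover have "(LINT y|lborel. p1 y * (C * exp (- (x - a*\<alpha>1)\<^sup>2 / (2 * b\<^sup>2))))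
        = C * exp (- (x - a*\<alpha>1)\<^sup>2 / (2 * b\<^sup>2))" using p1I by simp
    ultimately show ?thesis by linarith
  qed
  have n1pos: "0 < N p1 x" using n1low C0 by (meson exp_gt_zero mult_pos_pos order_less_le_trans)
  have nmup: "N pm1 x \<le> C * exp (- (x + a*\<alpha>1)\<^sup>2 / (2 * b\<^sup>2))"
  proof -
    have "N pm1 x \<le> (LINT y|lborel. pm1 y * (C * exp (- (x + a*\<alpha>1)\<^sup>2 / (2 * b\<^sup>2))))"
      unfolding N_def
    proof (rule integral_mono[OF intK[OF pm0 pmm pmi]])
      show "integrable lborel (\<lambda>y. pm1 y * (C * exp (- (x + a * \<alpha>1)\<^sup>2 / (2 * b\<^sup>2))))" using pmi by simp
      fix y
      show "pm1 y * K y x \<le> pm1 y * (C * exp (- (x + a * \<alpha>1)\<^sup>2 / (2 * b\<^sup>2)))"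
      proof (cases "pm1 y = 0")
        case False
        then have y: "y \<le> - \<alpha>1" using sm by auto
        have "a * y \<le> a * (- \<alpha>1)" using y a0 by (intro mult_left_mono) auto
        then have "x + a*\<alpha>1 \<le> x - a*y" by simp
        moreover have "0 \<le> x + a*\<alpha>1" using x0 a0 a1 by simp
        ultimately have "(x + a*\<alpha>1)\<^sup>2 \<le> (x - a*y)\<^sup>2" by (simp add: power_mono)
        then have "- (x - a*y)\<^sup>2 / (2 * b\<^sup>2) \<le> - (x + a*\<alpha>1)\<^sup>2 / (2 * b\<^sup>2)"
          using bb by (intro divide_right_mono) auto
        then have "K y x \<le> C * exp (- (x + a * \<alpha>1)\<^sup>2 / (2 * b\<^sup>2))"
          unfolding Kdef using C0 by simp
        then show ?thesis using pm0 by (simp add: mult_left_mono)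
      qed simp
    qed
    moreover have "(LINT y|lborel. pm1 y * (C * exp (- (x + a*\<alpha>1)\<^sup>2 / (2 * b\<^sup>2))))
        = C * exp (- (x + a*\<alpha>1)\<^sup>2 / (2 * b\<^sup>2))" using pmI by simp
    ultimately show ?thesis by linarith
  qed
  have ne: "N pm1 x \<le> E * N p1 x"
  proof -
    have "- (x + a*\<alpha>1)\<^sup>2 / (2 * b\<^sup>2) = - 2 * a * \<alpha>1 * x / b\<^sup>2 + - (x - a*\<alpha>1)\<^sup>2 / (2 * b\<^sup>2)"
      using b0 by (simp add: field_simps power2_eq_square)
    then have "exp (- (x + a*\<alpha>1)\<^sup>2 / (2 * b\<^sup>2)) = E * exp (- (x - a*\<alpha>1)\<^sup>2 / (2 * b\<^sup>2))"
      unfolding E_def by (metis exp_add)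
    then have "C * exp (- (x + a*\<alpha>1)\<^sup>2 / (2 * b\<^sup>2)) = E * (C * exp (- (x - a*\<alpha>1)\<^sup>2 / (2 * b\<^sup>2)))"
      by simp
    also have "\<dots> \<le> E * N p1 x" using n1low unfolding E_def by (intro mult_left_mono) auto
    finally show ?thesis using nmup by simp
  qed
  have AB: "0 \<le> A + Bm" unfolding A_def Bm_def using bb a0 a1 a12
    by (simp add: add_divide_distrib[symmetric])
  have sc1: "score (noised_density T p1 t) x = D p1 / N p1 x"
    unfolding nd by (rule score_eq[OF dN[OF p10 p1m p1i] n1pos])
  have mixeq: "mix_density T p1 pm1 t = (\<lambda>z. 1/2 * N p1 z + 1/2 * N pm1 z)"
    unfolding mix_density_def[abs_def] nd by simp
  have dmix: "(mix_density T p1 pm1 t has_real_derivative 1/2 * D p1 + 1/2 * D pm1) (at x)"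
    unfolding mixeq by (intro DERIV_add DERIV_cmult dN p10 p1m p1i pm0 pmm pmi)
  have mixpos: "0 < mix_density T p1 pm1 t x" unfolding mixeq using n1pos nm0 by simp
  have sc2: "score (mix_density T p1 pm1 t) x = (1/2 * D p1 + 1/2 * D pm1) / (1/2 * N p1 x + 1/2 * N pm1 x)"
    using score_eq[OF dmix mixpos] unfolding mixeq by simp
  have "guided_field T p1 pm1 w t x = x + (w + 1) * (D p1 / N p1 x) - w * ((1/2 * D p1 + 1/2 * D pm1) / (1/2 * N p1 x + 1/2 * N pm1 x))"
    unfolding guided_field_def sc1 sc2 by simp
  also have "\<dots> \<le> x + A + w * (A + Bm) * E"
    by (rule field_algebra[OF n1pos nm0 w0 d1 dm ne AB])
  also have "\<dots> = x + (a * \<alpha>2 - x) / b\<^sup>2 + w * (2 * a * \<alpha>2 / b\<^sup>2) * exp (- 2 * a * \<alpha>1 * x / b\<^sup>2)"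
    unfolding A_def Bm_def E_def by (simp add: add_divide_distrib[symmetric])
  finally show ?thesis unfolding a_def b_def .
qed

lemma ode_inv:
  fixes X X' :: "real \<Rightarrow> real"
  assumes cont: "\<And>u v. s0 \<le> u \<Longrightarrow> u < v \<Longrightarrow> v \<le> 1 \<Longrightarrow> continuous_on {u..v} X"
    and der: "\<And>s. s0 < s \<Longrightarrow> s < 1 \<Longrightarrow> (X has_real_derivative X' s) (at s)"
    and bnd: "\<And>s. s0 < s \<Longrightarrow> s < 1 \<Longrightarrow> V \<le> X s \<Longrightarrow> X' s * (1 - s\<^sup>2) \<le> s * (V - X s) - c"
    and c0: "0 < c" and s00: "0 < s0"
    and \<sigma>: "s0 \<le> \<sigma>" "\<sigma> < 1" and X\<sigma>: "X \<sigma> \<le> V" and s2: "\<sigma> \<le> s2" "s2 \<le> 1"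
  shows "X s2 \<le> V"
proof (rule ccontr)
  assume "\<not> X s2 \<le> V"
  then have gt: "V < X s2" by simp
  then have lt: "\<sigma> < s2" using X\<sigma> s2 by (cases "\<sigma> = s2") auto
  define S where "S = {s \<in> {\<sigma>..s2}. X s \<le> V}"
  have cS: "continuous_on {\<sigma>..s2} X" using cont \<sigma> lt s2 by simp
  have clS: "closed S" unfolding S_def
    by (rule continuous_on_closed_Collect_le[OF cS continuous_on_const]) simp
  have ne: "S \<noteq> {}" using X\<sigma> lt unfolding S_def by (auto intro!: exI[of _ \<sigma>])
  have bdd: "bdd_above S" unfolding S_def by (rule bdd_aboveI[where M=s2]) auto
  define m where "m = Sup S"
  have mS: "m \<in> S" unfolding m_def by (rule closed_contains_Sup[OF ne bdd clS])
  then have m: "\<sigma> \<le> m" "m \<le> s2" "X m \<le> V" unfolding S_def by auto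
  have ms2: "m < s2" using m gt by (cases "m = s2") auto
  have above: "V < X z" if "m < z" "z \<le> s2" for z
  proof (rule ccontr)
    assume "\<not> V < X z"
    then have "z \<in> S" unfolding S_def using that m by auto
    then have "z \<le> m" unfolding m_def by (rule cSup_upper[OF _ bdd])
    then show False using that by simp
  qed
  have "X s2 \<le> X m"
  proof (rule DERIV_nonpos_imp_decreasing_open[OF less_imp_le[OF ms2]])
    fix z assume z: "m < z" "z < s2"
    have z01: "s0 < z" "z < 1" using z m \<sigma> s2 by auto
    have "X' z * (1 - z\<^sup>2) \<le> z * (V - X z) - c"
      by (rule bnd[OF z01]) (use above[of z] z in auto)
    also have "\<dots> < 0"
    proof -
      have "z * (V - X z) < 0" using above[of z] z z01 s00 by (intro mult_pos_neg) auto
      then show ?thesis using c0 by linarith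
    qed
    finally have "X' z * (1 - z\<^sup>2) < 0" .
    moreover have "0 < 1 - z\<^sup>2" using z01 s00 by (simp add: power_less_one_iff abs_square_less_1)
    ultimately have "X' z \<le> 0" by (simp add: mult_less_0_iff)
    then show "\<exists>y. (X has_real_derivative y) (at z) \<and> y \<le> 0" using der[OF z01] by blast
  next
    show "continuous_on {m..s2} X" using cont m \<sigma> ms2 s2 by simp
  qed
  then show False using m gt by simp
qed

lemma ode_decay:
  fixes X X' :: "real \<Rightarrow> real"
  assumes cont: "\<And>u v. s0 \<le> u \<Longrightarrow> u < v \<Longrightarrow> v \<le> 1 \<Longrightarrow> continuous_on {u..v} X"
    and der: "\<And>s. s0 < s \<Longrightarrow> s < 1 \<Longrightarrow> (X has_real_derivative X' s) (at s)"
    and bnd: "\<And>s. s0 < s \<Longrightarrow> s < 1 \<Longrightarrow> V \<le> X s \<Longrightarrow> X' s * (1 - s\<^sup>2) \<le> s * (V - X s) - c"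
    and s00: "0 < s0"
    and u: "s0 \<le> u" "u < v" "v < 1" and above: "\<forall>s\<in>{u..v}. V < X s"
  shows "(X v - V + c * v) / sqrt (1 - v\<^sup>2) \<le> (X u - V + c * u) / sqrt (1 - u\<^sup>2)"
proof (rule DERIV_nonpos_imp_decreasing_open[OF less_imp_le[OF u(2)]])
  have pos: "0 < 1 - s\<^sup>2" if "s \<in> {u..v}" for s
  proof -
    have "0 \<le> s" "s < 1" using that u s00 by auto
    then show ?thesis by (simp add: power_less_one_iff abs_square_less_1)
  qed
  show "continuous_on {u..v} (\<lambda>s. (X s - V + c * s) / sqrt (1 - s\<^sup>2))"
  proof (intro continuous_on_divide continuous_on_add continuous_on_diff continuous_on_mult
      continuous_on_const continuous_on_id continuous_on_real_sqrt continuous_on_power)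
    show "continuous_on {u..v} X" using cont u by simp
    show "\<forall>s\<in>{u..v}. sqrt (1 - s\<^sup>2) \<noteq> 0" using pos by fastforce
  qed
  fix z assume z: "u < z" "z < v"
  have z01: "s0 < z" "z < 1" using z u by auto
  have zpos: "0 < z" using z01 s00 by simp
  have p: "0 < 1 - z\<^sup>2" using pos z by simp
  define r where "r = sqrt (1 - z\<^sup>2)"
  have r0: "0 < r" unfolding r_def using p by simp
  have rr: "r * r = 1 - z\<^sup>2" unfolding r_def using p by simp
  have dr: "((\<lambda>s. sqrt (1 - s\<^sup>2)) has_real_derivative (- z / r)) (at z)"
    unfolding r_def using p by (auto intro!: derivative_eq_intros simp: field_simps power2_eq_square)
  have dn: "((\<lambda>s. X s - V + c * s) has_real_derivative X' z + c) (at z)"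
    by (auto intro!: derivative_eq_intros der[OF z01])
  have dg: "((\<lambda>s. (X s - V + c * s) / sqrt (1 - s\<^sup>2)) has_real_derivative
      ((X' z + c) * r - (X z - V + c * z) * (- z / r)) / (r * r)) (at z)"
    using DERIV_divide[OF dn dr] r0 unfolding r_def by simp
  have "X' z * (1 - z\<^sup>2) \<le> z * (V - X z) - c"
  proof (rule bnd[OF z01])
    have "z \<in> {u..v}" using z by simp
    then show "V \<le> X z" using above by (meson less_imp_le)
  qed
  then have key: "((X' z + c) * r - (X z - V + c * z) * (- z / r)) * r \<le> 0"
  proof -
    have "((X' z + c) * r - (X z - V + c * z) * (- z / r)) * r = (X' z + c) * (r * r) + (X z - V + c * z) * z"
      using r0 by (simp add: field_simps)
    also have "\<dots> = X' z * (1 - z\<^sup>2) + c + z * (X z - V)" unfolding rr by (simp add: algebra_simps power2_eq_square)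
    finally show ?thesis using \<open>X' z * (1 - z\<^sup>2) \<le> z * (V - X z) - c\<close> by (simp add: algebra_simps)
  qed
  then have "(X' z + c) * r - (X z - V + c * z) * (- z / r) \<le> 0" using r0 by (simp add: mult_le_0_iff)
  then have "((X' z + c) * r - (X z - V + c * z) * (- z / r)) / (r * r) \<le> 0" using r0
    by (simp add: divide_nonpos_pos)
  then show "\<exists>y. ((\<lambda>s. (X s - V + c * s) / sqrt (1 - s\<^sup>2)) has_real_derivative y) (at z) \<and> y \<le> 0"
    using dg by blast
qed

lemma exp_neg_le_inv:
  fixes u :: real assumes "0 < u" shows "exp (- u) \<le> 1 / u"
proof -
  have "u \<le> exp u" using exp_ge_add_one_self[of u] by linarith
  from le_imp_inverse_le[OF this assms] show ?thesis by (simp add: exp_minus inverse_eq_divide)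
qed

lemma P_ineq:
  fixes \<alpha>1 \<alpha>2 w s0 s X :: real
  assumes a1: "0 < \<alpha>1" and a12: "\<alpha>1 < \<alpha>2" and w1: "1 < w" and big: "256 \<le> \<alpha>2\<^sup>2 * w"
    and s0: "3/4 \<le> s0" "s0 < 1" and s: "s0 \<le> s" "s < 1"
    and XV: "\<alpha>2 + 4 * (1 - s0) * \<alpha>2 * (1 + \<alpha>2 * w / \<alpha>1\<^sup>2) \<le> X"
  shows "\<alpha>2 - s * X + 2 * w * \<alpha>2 * exp (- 2 * s * \<alpha>1 * X / (1 - s\<^sup>2))
     \<le> s * ((\<alpha>2 + 4 * (1 - s0) * \<alpha>2 * (1 + \<alpha>2 * w / \<alpha>1\<^sup>2)) - X) - 2 * (1 - s0) * \<alpha>2"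
proof -
  define \<delta> where "\<delta> = 1 - s0"
  define E0 where "E0 = \<alpha>2 * w / \<alpha>1\<^sup>2"
  define V where "V = \<alpha>2 + 4 * \<delta> * \<alpha>2 * (1 + E0)"
  have \<delta>0: "0 < \<delta>" "\<delta> \<le> 1/4" using s0 unfolding \<delta>_def by auto
  have a2: "0 < \<alpha>2" using a1 a12 by simp
  have E00: "0 < E0" unfolding E0_def using a1 a2 w1 by simp
  have V0: "0 < V" unfolding V_def using \<delta>0 a2 E00 by (simp add: add_pos_nonneg)
  have XV': "V \<le> X" using XV unfolding V_def \<delta>_def E0_def by simp
  have X0: "0 < X" using V0 XV' by simp
  have sp: "0 < s" using s s0 by simp
  have q0: "0 < 1 - s\<^sup>2" using s sp by (simp add: power_less_one_iff abs_square_less_1)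
  have q1: "1 - s\<^sup>2 \<le> 2 * \<delta>"
  proof -
    have "1 - s\<^sup>2 = (1 - s) * (1 + s)" by (simp add: algebra_simps power2_eq_square)
    also have "\<dots> \<le> \<delta> * 2" using s \<delta>_def sp by (intro mult_mono) auto
    finally show ?thesis by simp
  qed
  define k where "k = 2 * s * \<alpha>1 * X / (1 - s\<^sup>2)"
  define k1 where "k1 = 3/4 * \<alpha>1 * \<alpha>2 / \<delta>"
  define k2 where "k2 = 3 * \<alpha>2\<^sup>2 * w / \<alpha>1"
  have k10: "0 < k1" unfolding k1_def using a1 a2 \<delta>0 by simp
  have k20: "0 < k2" unfolding k2_def using a1 a2 w1 by simp
  have kk: "k1 + k2 \<le> k"
  proof -
    have "2 * s * \<alpha>1 * X / (2 * \<delta>) \<le> k" unfolding k_def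
      using q0 q1 sp a1 X0 by (intro divide_left_mono) auto
    moreover have "2 * s * \<alpha>1 * X / (2 * \<delta>) = (s * X) * \<alpha>1 / \<delta>" by (simp add: field_simps)
    moreover have "(3/4 * V) * \<alpha>1 / \<delta> \<le> (s * X) * \<alpha>1 / \<delta>"
    proof -
      have "3/4 * V \<le> s * X" using s s0 XV' V0 by (intro mult_mono) auto
      then show ?thesis using a1 \<delta>0 by (intro divide_right_mono mult_right_mono) auto
    qed
    moreover have "(3/4 * V) * \<alpha>1 / \<delta> = k1 + 3 * \<alpha>1 * \<alpha>2 * (1 + E0)"
      unfolding V_def k1_def using \<delta>0 by (simp add: field_simps)
    moreover have "k2 \<le> 3 * \<alpha>1 * \<alpha>2 * (1 + E0)"
    proof -
      have "k2 = 3 * \<alpha>1 * \<alpha>2 * E0" unfolding k2_def E0_def using a1 by (simp add: field_simps power2_eq_square)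
      then show ?thesis using a1 a2 by simp
    qed
    ultimately show ?thesis by linarith
  qed
  have ek: "exp (- k) \<le> 1 / (k1 * k2)"
  proof -
    have "exp (- k) \<le> exp (- k1 + - k2)" using kk by simp
    also have "\<dots> = exp (- k1) * exp (- k2)" by (rule exp_add)
    also have "\<dots> \<le> (1 / k1) * (1 / k2)"
      using exp_neg_le_inv[OF k10] exp_neg_le_inv[OF k20] k10 k20 by (intro mult_mono) auto
    finally show ?thesis by simp
  qed
  have T1: "2 * w * \<alpha>2 * exp (- k) \<le> 3 * \<delta> * \<alpha>2 * E0"
  proof -
    have "2 * w * \<alpha>2 * exp (- k) \<le> 2 * w * \<alpha>2 * (1 / (k1 * k2))"
      using ek w1 a2 by (intro mult_left_mono) auto
    also have "\<dots> = 8 * \<delta> / (9 * \<alpha>2\<^sup>2)" unfolding k1_def k2_def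
      using a1 a2 \<delta>0 w1 by (simp add: field_simps power2_eq_square)
    also have "\<dots> \<le> 3 * \<delta> * \<alpha>2 * E0"
    proof -
      have "\<alpha>1\<^sup>2 \<le> \<alpha>2\<^sup>2" using a1 a12 by (simp add: power_mono)
      have "\<alpha>2\<^sup>2 * 256 \<le> \<alpha>2\<^sup>2 * (\<alpha>2\<^sup>2 * w)" using big by (intro mult_left_mono) auto
      then have "8 * \<alpha>1\<^sup>2 \<le> 27 * (\<alpha>2\<^sup>2 * (\<alpha>2\<^sup>2 * w))" using \<open>\<alpha>1\<^sup>2 \<le> \<alpha>2\<^sup>2\<close> zero_le_power2[of \<alpha>2] by linarith
      then have "8 * \<delta> * \<alpha>1\<^sup>2 \<le> 27 * \<delta> * (\<alpha>2\<^sup>2 * (\<alpha>2\<^sup>2 * w))" using \<delta>0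
        by (metis (no_types, opaque_lifting) mult.assoc mult.commute mult_le_cancel_left_pos)
      then show ?thesis unfolding E0_def using a1 a2
        by (simp add: field_simps power2_eq_square)
    qed
    finally show ?thesis .
  qed
  have h1: "3 * (\<delta> * \<alpha>2 * (1 + E0)) \<le> 4 * s * (\<delta> * \<alpha>2 * (1 + E0))"
    using s s0 \<delta>0 a2 E00 by (intro mult_right_mono) auto
  have h2: "(1 - s) * \<alpha>2 \<le> \<delta> * \<alpha>2" using s a2 unfolding \<delta>_def by (intro mult_right_mono) auto
  have "s * (V - X) - 2 * \<delta> * \<alpha>2 = s * \<alpha>2 + 4 * s * (\<delta> * \<alpha>2 * (1 + E0)) - s * X - 2 * \<delta> * \<alpha>2"
    unfolding V_def by (simp add: algebra_simps)
  moreover have "\<alpha>2 - s * X + 2 * w * \<alpha>2 * exp (- k) \<le> s * \<alpha>2 + 4 * s * (\<delta> * \<alpha>2 * (1 + E0)) - s * X - 2 * \<delta> * \<alpha>2"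
  proof -
    have "\<alpha>2 - s * \<alpha>2 = (1 - s) * \<alpha>2" by (simp add: algebra_simps)
    moreover have "3 * (\<delta> * \<alpha>2 * (1 + E0)) = 3 * \<delta> * \<alpha>2 + 3 * \<delta> * \<alpha>2 * E0" by (simp add: algebra_simps)
    ultimately show ?thesis using T1 h1 h2 by linarith
  qed
  ultimately show ?thesis unfolding k_def V_def \<delta>_def E0_def by (simp add: mult.assoc)
qed

lemma S_ineq:
  fixes \<alpha>1 \<alpha>2 w s0 D Y0 :: real
  assumes a1: "0 < \<alpha>1" and a12: "\<alpha>1 < \<alpha>2" and w1: "1 < w" and a2w: "16 \<le> \<alpha>2 * w"
    and s0: "3/4 \<le> s0" "s0 < 1"
    and DU: "4 * (1 - s0) * \<alpha>2 * (1 + \<alpha>2 * w / \<alpha>1\<^sup>2) < D" and Y0: "0 < Y0" "Y0 \<le> D"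
  defines "s1 \<equiv> 1 - 16 * (1 - s0)^5 / ((1 - 2 * (1 - s0))^4 * D^4)"
  shows "s0 < s1" "s1 < 1"
    "sqrt (1 - s1\<^sup>2) * (Y0 + 2 * (1 - s0) * \<alpha>2 * s0) \<le> 2 * (1 - s0) * \<alpha>2 * s1 * sqrt (1 - s0\<^sup>2)"
proof -
  define \<delta> where "\<delta> = 1 - s0"
  define E0 where "E0 = \<alpha>2 * w / \<alpha>1\<^sup>2"
  define U where "U = 4 * \<delta> * \<alpha>2 * (1 + E0)"
  define c where "c = 2 * \<delta> * \<alpha>2"
  define m where "m = 1 - 2 * \<delta>"
  define \<epsilon> where "\<epsilon> = 16 * \<delta>^5 / (m^4 * D^4)"
  have s1e: "s1 = 1 - \<epsilon>" unfolding s1_def \<epsilon>_def m_def \<delta>_def by simp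
  have \<delta>0: "0 < \<delta>" "\<delta> \<le> 1/4" using s0 unfolding \<delta>_def by auto
  have m0: "1/2 \<le> m" "m \<le> 1" unfolding m_def using \<delta>0 by auto
  have a2: "0 < \<alpha>2" using a1 a12 by simp
  have E00: "0 < E0" unfolding E0_def using a1 a2 w1 by simp
  have DU': "U < D" using DU unfolding U_def E0_def \<delta>_def by simp
  have a2E: "w \<le> \<alpha>2 * E0"
  proof -
    have "\<alpha>1\<^sup>2 \<le> \<alpha>2\<^sup>2" using a1 a12 by (simp add: power_mono)
    then have "1 \<le> \<alpha>2\<^sup>2 / \<alpha>1\<^sup>2" using a1 by simp
    then have "w * 1 \<le> w * (\<alpha>2\<^sup>2 / \<alpha>1\<^sup>2)" using w1 by (intro mult_left_mono) auto
    then show ?thesis unfolding E0_def by (simp add: power2_eq_square mult.commute mult.left_commute)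
  qed
  have U1: "4 * \<delta> * w \<le> U"
  proof -
    have "4 * \<delta> * w \<le> 4 * \<delta> * (\<alpha>2 * E0)" using a2E \<delta>0 by simp
    moreover have "U = 4 * \<delta> * \<alpha>2 + 4 * \<delta> * (\<alpha>2 * E0)" unfolding U_def by (simp add: algebra_simps)
    moreover have "0 \<le> 4 * \<delta> * \<alpha>2" using \<delta>0 a2 by simp
    ultimately show ?thesis by linarith
  qed
  have U2: "64 * \<delta> \<le> \<alpha>2 * U"
  proof -
    have "\<alpha>2 * w \<le> \<alpha>2 * (\<alpha>2 * E0)" using a2E a2 by simp
    then have "4 * \<delta> * (\<alpha>2 * w) \<le> 4 * \<delta> * (\<alpha>2 * (\<alpha>2 * E0))" using \<delta>0 by simp
    moreover have "\<alpha>2 * U = 4 * \<delta> * \<alpha>2 * \<alpha>2 + 4 * \<delta> * (\<alpha>2 * (\<alpha>2 * E0))" unfolding U_def by (simp add: algebra_simps)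
    moreover have "0 \<le> 4 * \<delta> * \<alpha>2 * \<alpha>2" using \<delta>0 a2 by simp
    moreover have "64 * \<delta> \<le> 4 * \<delta> * (\<alpha>2 * w)" using a2w \<delta>0 by simp
    ultimately show ?thesis by linarith
  qed
  have U3: "4 * \<delta> * \<alpha>2 \<le> U" unfolding U_def using \<delta>0 a2 E00 by simp
  have D0: "0 < D" using DU' U3 \<delta>0 a2 by (smt (verit) mult_pos_pos)
  have a2D: "64 * \<delta> \<le> \<alpha>2 * D"
  proof -
    have "\<alpha>2 * U \<le> \<alpha>2 * D" using DU' a2 by (intro mult_left_mono) auto
    then show ?thesis using U2 by linarith
  qed
  have cD: "c \<le> D / 2" unfolding c_def using U3 DU' by simp
  have mD: "2 * \<delta> < m * D"
  proof -
    have "4 * \<delta> * 1 < 4 * \<delta> * w" using \<delta>0 w1 by (intro mult_strict_left_mono) auto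
    then have "2 * \<delta> < D / 2" using U1 DU' by linarith
    also have "D / 2 \<le> m * D" using m0 D0 by simp
    finally show ?thesis .
  qed
  have eps0: "0 < \<epsilon>" unfolding \<epsilon>_def using \<delta>0 m0 D0 by simp
  have eps1: "\<epsilon> < \<delta>"
  proof -
    have "(2 * \<delta>)^4 < (m * D)^4" using mD \<delta>0 by (intro power_strict_mono) auto
    then have "16 * \<delta>^4 < m^4 * D^4" by (simp add: power_mult_distrib)
    then have "16 * \<delta>^5 / (m^4 * D^4) < 16 * \<delta>^5 / (16 * \<delta>^4)"
      using \<delta>0 m0 D0 by (intro divide_strict_left_mono) auto
    also have "\<dots> = \<delta>" using \<delta>0 by (simp add: field_simps numeral_eq_Suc)
    finally show ?thesis unfolding \<epsilon>_def .
  qed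
  show "s0 < s1" unfolding s1e using eps1 \<delta>_def by simp
  show "s1 < 1" unfolding s1e using eps0 by simp
  have s1b: "3/4 \<le> s1" "s1 < 1" using eps1 eps0 s0 \<delta>_def s1e by auto
  define A where "A = (1 - s1\<^sup>2) * (Y0 + c * s0)\<^sup>2"
  define B where "B = (c * s1)\<^sup>2 * (1 - s0\<^sup>2)"
  have c0: "0 < c" unfolding c_def using \<delta>0 a2 by simp
  have AB: "A \<le> B"
  proof -
    have e1: "1 - s1\<^sup>2 \<le> 2 * \<epsilon>"
    proof -
      have "1 - s1\<^sup>2 = \<epsilon> * (1 + s1)" unfolding s1e by (simp add: algebra_simps power2_eq_square)
      also have "\<dots> \<le> \<epsilon> * 2" using s1b eps0 by (intro mult_left_mono) auto
      finally show ?thesis by simp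
    qed
    have e2: "(Y0 + c * s0)\<^sup>2 \<le> 9/4 * D\<^sup>2"
    proof -
      have "c * s0 \<le> c" using c0 s0 by (simp add: mult_left_le)
      then have "Y0 + c * s0 \<le> 3/2 * D" using Y0 cD by simp
      moreover have "0 \<le> Y0 + c * s0" using Y0 c0 s0 by simp
      ultimately have "(Y0 + c * s0)\<^sup>2 \<le> (3/2 * D)\<^sup>2" by (intro power_mono) auto
      moreover have "(3/2 * D)\<^sup>2 = 9/4 * D\<^sup>2" by (simp add: power2_eq_square)
      ultimately show ?thesis by linarith
    qed
    have "A \<le> (2 * \<epsilon>) * (9/4 * D\<^sup>2)" unfolding A_def
      using e1 e2 s1b eps0 by (intro mult_mono) (auto simp: power_le_one abs_square_le_1)
    also have "\<dots> = (72 / m^4) * (\<delta>^5 / D\<^sup>2)" unfolding \<epsilon>_def using D0 m0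
      by (simp add: field_simps power2_eq_square power4_eq_xxxx)
    also have "\<dots> \<le> 1152 * (\<delta>^5 / D\<^sup>2)"
    proof (rule mult_right_mono)
      have "(1/2)^4 \<le> m^4" using m0 by (intro power_mono) auto
      then have "1/16 \<le> m^4" by (simp add: power_divide)
      then show "72 / m^4 \<le> 1152" using m0 by (simp add: divide_le_eq)
    qed (use \<delta>0 in simp)
    also have "\<dots> \<le> 9/4 * \<delta>^3 * \<alpha>2\<^sup>2"
    proof -
      have "(64 * \<delta>)\<^sup>2 \<le> (\<alpha>2 * D)\<^sup>2" using a2D \<delta>0 by (intro power_mono) auto
      then have "4096 * \<delta>\<^sup>2 \<le> \<alpha>2\<^sup>2 * D\<^sup>2" by (simp add: power_mult_distrib)
      moreover have "0 \<le> \<delta>\<^sup>2" by simp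
      ultimately have "512 * \<delta>\<^sup>2 \<le> \<alpha>2\<^sup>2 * D\<^sup>2" by linarith
      then have "(9/4 * \<delta>^3) * (512 * \<delta>\<^sup>2) \<le> (9/4 * \<delta>^3) * (\<alpha>2\<^sup>2 * D\<^sup>2)"
        using \<delta>0 by (intro mult_left_mono) auto
      moreover have "(9/4 * \<delta>^3) * (512 * \<delta>\<^sup>2) = 1152 * \<delta>^5"
        by (simp add: power2_eq_square power3_eq_cube numeral_eq_Suc)
      ultimately have "1152 * \<delta>^5 \<le> 9/4 * \<delta>^3 * \<alpha>2\<^sup>2 * D\<^sup>2"
        by (simp add: mult.assoc)
      then show ?thesis using D0 by (simp add: divide_le_eq)
    qed
    also have "\<dots> \<le> B"
    proof -
      have "(3/4)\<^sup>2 \<le> s1\<^sup>2" using s1b by (intro power_mono) auto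
      have "\<delta> \<le> 1 - s0\<^sup>2"
      proof -
        have "1 - s0\<^sup>2 = \<delta> * (1 + s0)" unfolding \<delta>_def by (simp add: algebra_simps power2_eq_square)
        then show ?thesis using \<delta>0 s0 by simp
      qed
      have "9/4 * \<delta>^3 * \<alpha>2\<^sup>2 = (4 * \<delta>\<^sup>2 * \<alpha>2\<^sup>2) * (3/4)\<^sup>2 * \<delta>"
        by (simp add: power2_eq_square power3_eq_cube)
      also have "\<dots> \<le> (4 * \<delta>\<^sup>2 * \<alpha>2\<^sup>2) * s1\<^sup>2 * (1 - s0\<^sup>2)"
        using \<open>(3/4)\<^sup>2 \<le> s1\<^sup>2\<close> \<open>\<delta> \<le> 1 - s0\<^sup>2\<close> \<delta>0
        by (intro mult_mono) auto
      also have "\<dots> = B" unfolding B_def c_def by (simp add: power_mult_distrib)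
      finally show ?thesis .
    qed
    finally show ?thesis .
  qed
  have "sqrt (1 - s1\<^sup>2) * (Y0 + c * s0) = sqrt A"
    unfolding A_def using Y0 c0 s0 by (simp add: real_sqrt_mult)
  also have "\<dots> \<le> sqrt B" using AB by simp
  also have "\<dots> = c * s1 * sqrt (1 - s0\<^sup>2)"
    unfolding B_def using c0 s1b by (simp add: real_sqrt_mult)
  finally show "sqrt (1 - s1\<^sup>2) * (Y0 + 2 * (1 - s0) * \<alpha>2 * s0) \<le> 2 * (1 - s0) * \<alpha>2 * s1 * sqrt (1 - s0\<^sup>2)"
    unfolding c_def \<delta>_def .
qed

lemma tc_range:
  fixes T s0 s :: real
  assumes "exp (- T) \<le> s0" "s0 \<le> s" "s < 1"
  shows "0 \<le> T + ln s" "T + ln s < T" "0 < s"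
proof -
  have s0p: "0 < s0" using assms(1) by (meson exp_gt_zero order_less_le_trans)
  show sp: "0 < s" using s0p assms by simp
  have "ln (exp (- T)) \<le> ln s" using assms sp by (subst ln_le_cancel_iff) auto
  then show "0 \<le> T + ln s" by simp
  show "T + ln s < T" using sp assms by simp
qed

lemma time_change:
  fixes x :: "real \<Rightarrow> real" and f :: "real \<Rightarrow> real \<Rightarrow> real"
  assumes ode: "\<forall>t\<in>{0..<T}. (x has_real_derivative f t (x t)) (at t within {0..<T})"
    and endpoint: "(x \<longlongrightarrow> x T) (at_left T)" and s0T: "exp (- T) \<le> s0"
  shows tc_deriv: "\<And>s. s0 < s \<Longrightarrow> s < 1 \<Longrightarrow>
      ((\<lambda>s. x (T + ln s)) has_real_derivative f (T + ln s) (x (T + ln s)) * (1/s)) (at s)"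
    and tc_cont: "\<And>u v. s0 \<le> u \<Longrightarrow> u < v \<Longrightarrow> v \<le> 1 \<Longrightarrow> continuous_on {u..v} (\<lambda>s. x (T + ln s))"
proof -
  have s0p: "0 < s0" using s0T by (meson exp_gt_zero order_less_le_trans)
  have dint: "(x has_real_derivative f t (x t)) (at t)" if "0 < t" "t < T" for t
  proof -
    have "t \<in> {0..<T}" using that by simp
    then have "(x has_real_derivative f t (x t)) (at t within {0..<T})" using ode by blast
    then have "(x has_real_derivative f t (x t)) (at t within {0<..<T})"
      by (rule has_field_derivative_subset) auto
    moreover have "at t within {0<..<T} = at t" using that by (intro at_within_open) auto
    ultimately show ?thesis by simp
  qed
  show der: "((\<lambda>s. x (T + ln s)) has_real_derivative f (T + ln s) (x (T + ln s)) * (1/s)) (at s)"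
    if "s0 < s" "s < 1" for s
  proof -
    have r: "0 \<le> T + ln s" "T + ln s < T" "0 < s" using tc_range[OF s0T, of s] that by auto
    have pos: "0 < T + ln s"
    proof -
      have "ln s0 < ln s" using s0p that by simp
      moreover have "- T \<le> ln s0" using s0T s0p by (metis ln_exp ln_le_cancel_iff exp_gt_zero)
      ultimately show ?thesis by simp
    qed
    have dl: "((\<lambda>s. T + ln s) has_real_derivative 1/s) (at s)"
      using r by (auto intro!: derivative_eq_intros)
    show ?thesis by (rule DERIV_chain2[OF dint[OF pos r(2)] dl])
  qed
  have ccont: "continuous (at t within {0..<T}) x" if "0 \<le> t" "t < T" for t
  proof -
    have "t \<in> {0..<T}" using that by simp
    then have "(x has_real_derivative f t (x t)) (at t within {0..<T})" using ode by blast
    then show ?thesis by (rule DERIV_continuous)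
  qed
  have right: "((\<lambda>s. x (T + ln s)) \<longlongrightarrow> x (T + ln u)) (at_right u)" if "s0 \<le> u" "u < 1" for u
  proof -
    have r: "0 \<le> T + ln u" "T + ln u < T" "0 < u" using tc_range[OF s0T that(1) that(2)] by auto
    have xl: "(x \<longlongrightarrow> x (T + ln u)) (at (T + ln u) within {0..<T})"
      using ccont[OF r(1) r(2)] by (simp add: continuous_within)
    have lnc: "((\<lambda>s. T + ln s) \<longlongrightarrow> T + ln u) (at_right u)"
      using r by (intro tendsto_intros tendsto_mono[OF at_le]) auto
    have "filterlim (\<lambda>s. T + ln s) (at (T + ln u) within {0..<T}) (at_right u)"
      unfolding filterlim_at
    proof (intro conjI lnc)
      show "\<forall>\<^sub>F s in at_right u. T + ln s \<in> {0..<T} \<and> T + ln s \<noteq> T + ln u"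
      proof (rule eventually_at_rightI[where b=1])
        fix s assume s: "s \<in> {u<..<1}"
        then have "0 \<le> T + ln s" "T + ln s < T" using tc_range[OF s0T, of s] that by auto
        moreover have "ln u < ln s" using s r by simp
        ultimately show "T + ln s \<in> {0..<T} \<and> T + ln s \<noteq> T + ln u" by auto
      qed (use that in auto)
    qed
    then show ?thesis using filterlim_compose[OF xl] by blast
  qed
  have left1: "((\<lambda>s. x (T + ln s)) \<longlongrightarrow> x (T + ln 1)) (at_left 1)"
  proof -
    have lnc: "((\<lambda>s. T + ln s) \<longlongrightarrow> T) (at_left 1)"
    proof -
      have "((\<lambda>s. T + ln s) \<longlongrightarrow> T + ln 1) (at_left 1)"
        by (intro tendsto_intros tendsto_mono[OF at_le]) auto
      then show ?thesis by simp
    qed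
    have "filterlim (\<lambda>s. T + ln s) (at_left T) (at_left 1)"
      unfolding filterlim_at
    proof (intro conjI lnc)
      show "\<forall>\<^sub>F s in at_left 1. T + ln s \<in> {..<T} \<and> T + ln s \<noteq> T"
      proof (rule eventually_at_leftI[where a=0])
        fix s :: real assume s: "s \<in> {0<..<1}"
        then show "T + ln s \<in> {..<T} \<and> T + ln s \<noteq> T" by auto
      qed simp
    qed
    then show ?thesis using filterlim_compose[OF endpoint] by simp
  qed
  show "continuous_on {u..v} (\<lambda>s. x (T + ln s))" if uv: "s0 \<le> u" "u < v" "v \<le> 1" for u v
  proof (rule continuous_on_IccI)
    show "((\<lambda>s. x (T + ln s)) \<longlongrightarrow> x (T + ln u)) (at_right u)" using right uv by simp
    show "((\<lambda>s. x (T + ln s)) \<longlongrightarrow> x (T + ln v)) (at_left v)"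
    proof (cases "v = 1")
      case True then show ?thesis using left1 by simp
    next
      case False
      then have "isCont (\<lambda>s. x (T + ln s)) v" using der[of v] uv
        by (intro DERIV_isCont) auto
      then show ?thesis by (simp add: isCont_def filterlim_at_split)
    qed
    fix s assume "u < s" "s < v"
    then have "isCont (\<lambda>s. x (T + ln s)) s" using der[of s] uv by (intro DERIV_isCont) auto
    then show "((\<lambda>s. x (T + ln s)) \<longlongrightarrow> x (T + ln s)) (at s)" by (simp add: isCont_def)
  qed (use uv in auto)
qed

theorem lemma3p6:
  fixes \<alpha>1 \<alpha>2 \<beta> T w s0 :: real
    and p1 pm1 :: "real \<Rightarrow> real"
    and x :: "real \<Rightarrow> real"
  assumes "0 < \<alpha>1" and "\<alpha>1 < \<alpha>2" and "1 \<le> \<beta>"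
    and "is_pdf p1" and "is_pdf pm1"
    and "\<forall>y. y \<notin> {\<alpha>1..\<alpha>2} \<longrightarrow> p1 y = 0"
    and "\<forall>y. y \<notin> {-\<alpha>2..-\<alpha>1} \<longrightarrow> pm1 y = 0"
    and "\<forall>x1\<in>{-\<alpha>2<..<-\<alpha>1}. \<forall>x2\<in>{\<alpha>1<..<\<alpha>2}.
           1/\<beta> \<le> pm1 x1 / p1 x2 \<and> pm1 x1 / p1 x2 \<le> \<beta>"
    and "0 < T"
    and "1 < w"
    and "\<alpha>2 - \<alpha>1 \<ge> 16 / sqrt (ln w)"
    and ode: "\<forall>t\<in>{0..<T}. (x has_real_derivative guided_field T p1 pm1 w t (x t)) (at t within {0..<T})"
    and endpoint: "(x \<longlongrightarrow> x T) (at_left T)"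
    and "3/4 \<le> s0" and "s0 < 1" and "exp (-T) \<le> s0"
    and "\<forall>s\<in>{s0..1}. x (T + ln s) \<ge> (\<alpha>1 + \<alpha>2) / 2"
  shows "\<forall>s\<in>{(if x (T + ln s0) = \<alpha>2 then s0
               else max (1 - 16 * (1 - s0)^5 /
                          ((1 - 2 * (1 - s0))^4 * (x (T + ln s0) - \<alpha>2)^4)) s0)..1}.
           x (T + ln s) \<le> \<alpha>2 * (1 + 4 * (1 - s0) * (1 + \<alpha>2 * w / \<alpha>1\<^sup>2))"
proof -
  note a1 = assms(1) and a12 = assms(2) and pdf1 = assms(4) and pdfm = assms(5)
    and sp1 = assms(6) and spm = assms(7) and T0 = assms(9) and w1 = assms(10) and gap = assms(11)
    and s0a = assms(14) and s0b = assms(15) and s0T = assms(16) and mid = assms(17)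
  define X where "X = (\<lambda>s. x (T + ln s))"
  define X' where "X' = (\<lambda>s. guided_field T p1 pm1 w (T + ln s) (X s) * (1/s))"
  define V where "V = \<alpha>2 + 4 * (1 - s0) * \<alpha>2 * (1 + \<alpha>2 * w / \<alpha>1\<^sup>2)"
  define c where "c = 2 * (1 - s0) * \<alpha>2"
  have a2: "0 < \<alpha>2" using a1 a12 by simp
  have s0p: "0 < s0" using s0a by simp
  have c0: "0 < c" unfolding c_def using s0b a2 by simp
  have E0p: "0 < \<alpha>2 * w / \<alpha>1\<^sup>2" using a1 a2 w1 by simp
  have Va2: "\<alpha>2 < V" unfolding V_def using s0b a2 E0p by (simp add: add_pos_pos)
  have target: "\<alpha>2 * (1 + 4 * (1 - s0) * (1 + \<alpha>2 * w / \<alpha>1\<^sup>2)) = V"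
    unfolding V_def by (simp add: algebra_simps)
  have der: "(X has_real_derivative X' s) (at s)" if "s0 < s" "s < 1" for s
    unfolding X_def X'_def
    by (rule time_change(1)[where f="\<lambda>t y. guided_field T p1 pm1 w t y", OF ode endpoint s0T that])
  have cont: "continuous_on {u..v} X" if "s0 \<le> u" "u < v" "v \<le> 1" for u v
    unfolding X_def by (rule time_change(2)[where f="\<lambda>t y. guided_field T p1 pm1 w t y", OF ode endpoint s0T that])
  define L where "L = ln w"
  have L0: "0 < L" unfolding L_def using w1 by simp
  have Lw: "1 + L \<le> w" unfolding L_def using ln_le_minus_one[of w] w1 by simp
  have a2L: "16 / sqrt L \<le> \<alpha>2" using gap a1 unfolding L_def by simp
  have big: "256 \<le> \<alpha>2\<^sup>2 * w"
  proof -
    have "(16 / sqrt L)\<^sup>2 \<le> \<alpha>2\<^sup>2" using a2L L0 by (intro power_mono) auto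
    then have "256 / L \<le> \<alpha>2\<^sup>2" using L0 by (simp add: power_divide)
    then have "256 \<le> \<alpha>2\<^sup>2 * L" using L0 by (simp add: divide_le_eq)
    also have "\<dots> \<le> \<alpha>2\<^sup>2 * w" using Lw by (intro mult_left_mono) auto
    finally show ?thesis .
  qed
  have a2w: "16 \<le> \<alpha>2 * w"
  proof -
    have sL: "sqrt L \<le> w"
    proof (cases "L \<le> 1")
      case True
      then have "sqrt L \<le> 1" by simp
      then show ?thesis using w1 by linarith
    next
      case False
      then have g1: "1 \<le> sqrt L" by simp
      have "sqrt L * 1 \<le> sqrt L * sqrt L" using g1 by (intro mult_left_mono) auto
      also have "\<dots> = L" using L0 by simp
      finally have "sqrt L \<le> L" by simp
      then show ?thesis using Lw by simp
    qed
    have "16 \<le> \<alpha>2 * sqrt L" using a2L L0 by (simp add: divide_le_eq mult.commute)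
    also have "\<dots> \<le> \<alpha>2 * w" using sL a2 by (intro mult_left_mono) auto
    finally show ?thesis .
  qed
  have bnd: "X' s * (1 - s\<^sup>2) \<le> s * (V - X s) - c" if s: "s0 < s" "s < 1" "V \<le> X s" for s
  proof -
    define t where "t = T + ln s"
    have r: "0 \<le> t" "t < T" "0 < s" unfolding t_def using tc_range[OF s0T, of s] s by auto
    have sa: "sched_a T t = s" unfolding sched_a_def t_def using r by simp
    have q0: "0 < 1 - s\<^sup>2" using r s by (simp add: power_less_one_iff abs_square_less_1)
    have sb: "(sched_b T t)\<^sup>2 = 1 - s\<^sup>2" unfolding sched_b_def sa using q0 by simp
    have mids: "(\<alpha>1 + \<alpha>2) / 2 \<le> X s" using mid s unfolding X_def by auto
    have fb: "guided_field T p1 pm1 w t (X s) \<le> X s + (s * \<alpha>2 - X s) / (1 - s\<^sup>2)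
        + w * (2 * s * \<alpha>2 / (1 - s\<^sup>2)) * exp (- 2 * s * \<alpha>1 * X s / (1 - s\<^sup>2))"
      using field_bound[OF a1 a12 pdf1 pdfm sp1 spm r(1) r(2) _ mids, of w] w1 unfolding sa sb by simp
    define e where "e = exp (- 2 * s * \<alpha>1 * X s / (1 - s\<^sup>2))"
    have "X' s * (1 - s\<^sup>2) = guided_field T p1 pm1 w t (X s) * ((1 - s\<^sup>2) / s)"
      unfolding X'_def t_def by simp
    also have "\<dots> \<le> (X s + (s * \<alpha>2 - X s) / (1 - s\<^sup>2) + w * (2 * s * \<alpha>2 / (1 - s\<^sup>2)) * e) * ((1 - s\<^sup>2) / s)"
      using fb q0 r unfolding e_def by (intro mult_right_mono) auto
    also have "\<dots> = \<alpha>2 - s * X s + 2 * w * \<alpha>2 * e"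
    proof -
      define q where "q = 1 - s\<^sup>2"
      have qn: "q \<noteq> 0" using q0 unfolding q_def by simp
      have "(X s + (s * \<alpha>2 - X s) / q + w * (2 * s * \<alpha>2 / q) * e) * (q / s)
          = (X s * q + s * \<alpha>2 - X s + 2 * w * s * \<alpha>2 * e) / s"
        using qn r by (simp add: field_simps)
      also have "X s * q + s * \<alpha>2 - X s + 2 * w * s * \<alpha>2 * e = s * (\<alpha>2 - s * X s + 2 * w * \<alpha>2 * e)"
        unfolding q_def by (simp add: algebra_simps power2_eq_square)
      finally show ?thesis unfolding q_def using r by simp
    qed
    also have "\<dots> \<le> s * (V - X s) - c"
      unfolding e_def V_def c_def
      by (rule P_ineq[OF a1 a12 w1 big s0a s0b _ s(2)]) (use s V_def in auto)
    finally show ?thesis .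
  qed
  show ?thesis
  proof (cases "X s0 \<le> V")
    case True
    show ?thesis
    proof
      fix s assume s: "s \<in> {(if x (T + ln s0) = \<alpha>2 then s0
               else max (1 - 16 * (1 - s0)^5 /
                          ((1 - 2 * (1 - s0))^4 * (x (T + ln s0) - \<alpha>2)^4)) s0)..1}"
      then have "s0 \<le> s" "s \<le> 1" by (auto split: if_splits)
      then have "X s \<le> V" using ode_inv[OF cont der bnd c0 s0p order_refl s0b True] by auto
      then show "x (T + ln s) \<le> \<alpha>2 * (1 + 4 * (1 - s0) * (1 + \<alpha>2 * w / \<alpha>1\<^sup>2))"
        unfolding target X_def by simp
    qed
  next
    case False
    then have XV: "V < X s0" by simp
    define D where "D = X s0 - \<alpha>2"
    define s1 where "s1 = 1 - 16 * (1 - s0)^5 / ((1 - 2 * (1 - s0))^4 * D^4)"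
    have ne: "x (T + ln s0) \<noteq> \<alpha>2" using XV Va2 unfolding X_def by auto
    have DU: "4 * (1 - s0) * \<alpha>2 * (1 + \<alpha>2 * w / \<alpha>1\<^sup>2) < D" using XV unfolding D_def V_def by simp
    have Y0: "0 < X s0 - V" "X s0 - V \<le> D" using XV Va2 unfolding D_def by auto
    note S = S_ineq[OF a1 a12 w1 a2w s0a s0b DU Y0]
    have s01: "s0 < s1" "s1 < 1" using S(1,2) unfolding s1_def by auto
    have Sq: "sqrt (1 - s1\<^sup>2) * (X s0 - V + c * s0) \<le> c * s1 * sqrt (1 - s0\<^sup>2)"
      using S(3) unfolding s1_def c_def by (simp add: mult.assoc)
    have lower: "(if x (T + ln s0) = \<alpha>2 then s0
               else max (1 - 16 * (1 - s0)^5 /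
                          ((1 - 2 * (1 - s0))^4 * (x (T + ln s0) - \<alpha>2)^4)) s0) = s1"
      using ne s01 unfolding s1_def D_def X_def by simp
    have "\<exists>\<sigma>\<in>{s0..s1}. X \<sigma> \<le> V"
    proof (rule ccontr)
      assume "\<not> ?thesis"
      then have above: "\<forall>s\<in>{s0..s1}. V < X s" by auto
      have g: "(X s1 - V + c * s1) / sqrt (1 - s1\<^sup>2) \<le> (X s0 - V + c * s0) / sqrt (1 - s0\<^sup>2)"
        by (rule ode_decay[OF cont der bnd s0p order_refl s01(1) s01(2) above])
      have r1: "0 < sqrt (1 - s1\<^sup>2)" using s01 s0p by (simp add: power_less_one_iff abs_square_less_1)
      have r0: "0 < sqrt (1 - s0\<^sup>2)" using s0b s0p by (simp add: power_less_one_iff abs_square_less_1)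
      have "X s1 - V + c * s1 \<le> sqrt (1 - s1\<^sup>2) * ((X s0 - V + c * s0) / sqrt (1 - s0\<^sup>2))"
        using g r1 by (simp add: divide_le_eq mult.commute)
      also have "\<dots> = (sqrt (1 - s1\<^sup>2) * (X s0 - V + c * s0)) / sqrt (1 - s0\<^sup>2)" by simp
      also have "\<dots> \<le> c * s1" using Sq r0 by (simp add: divide_le_eq)
      finally have "X s1 \<le> V" by simp
      moreover have "V < X s1" using above s01 by auto
      ultimately show False by simp
    qed
    then obtain \<sigma> where \<sigma>: "s0 \<le> \<sigma>" "\<sigma> \<le> s1" "X \<sigma> \<le> V" by auto
    show ?thesis
    proof
      fix s assume "s \<in> {(if x (T + ln s0) = \<alpha>2 then s0
               else max (1 - 16 * (1 - s0)^5 /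
                          ((1 - 2 * (1 - s0))^4 * (x (T + ln s0) - \<alpha>2)^4)) s0)..1}"
      then have s: "s1 \<le> s" "s \<le> 1" unfolding lower by auto
      have "X s \<le> V" using ode_inv[OF cont der bnd c0 s0p \<sigma>(1) _ \<sigma>(3), of s] s \<sigma> s01 by auto
      then show "x (T + ln s) \<le> \<alpha>2 * (1 + 4 * (1 - s0) * (1 + \<alpha>2 * w / \<alpha>1\<^sup>2))"
        unfolding target X_def by simp
    qed
  qed
qed

end
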